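(* Let $\psi_f(G)$ denote the minimum weight of a fractional weak hyperclique-cover of a directed hypergraph $G$. Every directed hypergraph $G$ satisfies $\beta(G)\le\psi_f(G)$.
   Context: A directed hypergraph instance consists of vertices (messages) $V=[n]$ and receivers $j=1,\dots,m$, each given by a pair $(N(j),f(j))$ with $f(j)\in[n]$ and $N(j)\subseteq[n]\setminus\{f(j)\}$; it is the index coding problem in which a server holds $x_1,\dots,x_n\in\Sigma$ ($|\Sigma|>1$) and receiver $j$ wants $x_{f(j)}$ and knows $(x_i)_{i\in N(j)}$. A solution is an encoding $\mathcal{E}:\Sigma^n\to\Sigma_P$ such that each receiver $j$ can determine $x_{f(j)}$ from $\mathcal{E}(x_1,\dots,x_n)$ and its side information for all message values; $\beta_t(G)$ is the minimum of $\lceil\log_2|\Sigma_P|\rceil$ over solutions with $|\Sigma|=2^t$, and $\beta(G)=\inf_t\beta_t(G)/t$. A weak hyperclique is a set $\mathcal{J}$ of receivers such that for every pair of distinct $i,j\in\mathcal{J}$, $f(i)\in N(j)$. A fractional weak hyperclique-cover assigns a nonnegative weight to each weak hyperclique so that for every receiver $j$ the total weight of weak hypercliques containing $j$ is at least $1$; its weight is the sum of all weights. *)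

theory Defs
  imports Complex_Main
begin

text \<open>A directed hypergraph instance: vertices (messages) are 0..<n, receivers are 0..<m;
  receiver j wants message f j and knows the messages in N j.\<close>
definition dir_hypergraph :: "nat \<Rightarrow> nat \<Rightarrow> (nat \<Rightarrow> nat set) \<Rightarrow> (nat \<Rightarrow> nat) \<Rightarrow> bool" where
  "dir_hypergraph n m N f \<longleftrightarrow> (\<forall>j<m. f j < n \<and> N j \<subseteq> {..<n} - {f j})"

definition msgs :: "nat \<Rightarrow> nat \<Rightarrow> (nat \<Rightarrow> nat) set" where
  "msgs n t = {x. (\<forall>i<n. x i < 2 ^ t) \<and> (\<forall>i\<ge>n. x i = 0)}"

definition ic_solution ::
  "nat \<Rightarrow> nat \<Rightarrow> (nat \<Rightarrow> nat set) \<Rightarrow> (nat \<Rightarrow> nat) \<Rightarrow> nat \<Rightarrow> ((nat \<Rightarrow> nat) \<Rightarrow> nat) \<Rightarrow> nat set \<Rightarrow> bool" where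
  "ic_solution n m N f t E P \<longleftrightarrow> finite P \<and> (\<forall>x\<in>msgs n t. E x \<in> P) \<and>
     (\<forall>j<m. \<exists>D :: nat \<Rightarrow> (nat \<Rightarrow> nat) \<Rightarrow> nat.
        \<forall>x\<in>msgs n t. D (E x) (\<lambda>i. if i \<in> N j then x i else 0) = x (f j))"

definition beta_t :: "nat \<Rightarrow> nat \<Rightarrow> (nat \<Rightarrow> nat set) \<Rightarrow> (nat \<Rightarrow> nat) \<Rightarrow> nat \<Rightarrow> nat" where
  "beta_t n m N f t = Inf {nat \<lceil>log 2 (real (card P))\<rceil> | E P. ic_solution n m N f t E P}"

definition beta :: "nat \<Rightarrow> nat \<Rightarrow> (nat \<Rightarrow> nat set) \<Rightarrow> (nat \<Rightarrow> nat) \<Rightarrow> real" where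
  "beta n m N f = (INF t\<in>{1..}. real (beta_t n m N f t) / real t)"

definition weak_hyperclique :: "nat \<Rightarrow> (nat \<Rightarrow> nat set) \<Rightarrow> (nat \<Rightarrow> nat) \<Rightarrow> nat set \<Rightarrow> bool" where
  "weak_hyperclique m N f J \<longleftrightarrow> J \<subseteq> {..<m} \<and> (\<forall>i\<in>J. \<forall>j\<in>J. i \<noteq> j \<longrightarrow> f i \<in> N j)"

definition weak_hypercliques :: "nat \<Rightarrow> (nat \<Rightarrow> nat set) \<Rightarrow> (nat \<Rightarrow> nat) \<Rightarrow> nat set set" where
  "weak_hypercliques m N f = {J. weak_hyperclique m N f J}"

definition frac_whc_cover :: "nat \<Rightarrow> (nat \<Rightarrow> nat set) \<Rightarrow> (nat \<Rightarrow> nat) \<Rightarrow> (nat set \<Rightarrow> real) \<Rightarrow> bool" where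
  "frac_whc_cover m N f w \<longleftrightarrow> (\<forall>J\<in>weak_hypercliques m N f. w J \<ge> 0) \<and>
     (\<forall>j<m. (\<Sum>J\<in>{J\<in>weak_hypercliques m N f. j \<in> J}. w J) \<ge> 1)"

definition psi_f :: "nat \<Rightarrow> nat \<Rightarrow> (nat \<Rightarrow> nat set) \<Rightarrow> (nat \<Rightarrow> nat) \<Rightarrow> real" where
  "psi_f n m N f = Inf {(\<Sum>J\<in>weak_hypercliques m N f. w J) | w. frac_whc_cover m N f w}"

end

theory Submission
  imports Defs
begin

lemma decode_ex:
  assumes "\<forall>x\<in>M. \<forall>y\<in>M. E x = E y \<and> (\<forall>i\<in>Nj. x i = y i) \<longrightarrow> x v = y v"
  shows "\<exists>D :: nat \<Rightarrow> (nat \<Rightarrow> nat) \<Rightarrow> nat. \<forall>x\<in>M. D (E x) (\<lambda>i. if i \<in> Nj then x i else 0) = x v"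
proof -
  define D where "D = (\<lambda>p s. (SOME y. y \<in> M \<and> E y = p \<and> (\<lambda>i. if i \<in> Nj then y i else 0) = s) v)"
  have "\<forall>x\<in>M. D (E x) (\<lambda>i. if i \<in> Nj then x i else 0) = x v"
  proof
    fix x assume x: "x \<in> M"
    let ?P = "\<lambda>y. y \<in> M \<and> E y = E x \<and> (\<lambda>i. if i \<in> Nj then y i else 0) = (\<lambda>i. if i \<in> Nj then x i else 0)"
    have px: "?P x" using x by simp
    define y where "y = (SOME y. ?P y)"
    have py: "?P y" unfolding y_def using someI[where P="?P", OF px] .
    have "\<forall>i\<in>Nj. y i = x i"
    proof
      fix i assume "i \<in> Nj"
      with py show "y i = x i" by (metis (no_types, lifting))
    qed
    moreover have "D (E x) (\<lambda>i. if i \<in> Nj then x i else 0) = y v"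
      unfolding D_def y_def by simp
    ultimately show "D (E x) (\<lambda>i. if i \<in> Nj then x i else 0) = x v"
      using assms x py by metis
  qed
  thus ?thesis by blast
qed

lemma bits_eq:
  fixes a a' :: nat
  assumes "a < 2 ^ b" "a' < 2 ^ b" "\<forall>q<b. bit a q = bit a' q"
  shows "a = a'"
proof -
  have "take_bit b a = a" "take_bit b a' = a'" using assms take_bit_nat_eq_self_iff by auto
  hence "bit a q = bit a' q" for q
    using assms(3) by (metis bit_take_bit_iff)
  thus ?thesis by (simp add: bit_eq_iff)
qed

lemma ceil_log_le:
  assumes "(p::nat) \<le> 2 ^ D" "p \<noteq> 0"
  shows "nat \<lceil>log 2 (real p)\<rceil> \<le> D"
proof -
  note False = assms(2)
  have "log 2 (real p) \<le> log 2 (2 ^ D)"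
    using False assms by (subst log_le_cancel_iff) (auto simp del: of_nat_power simp: of_nat_power[symmetric])
  also have "\<dots> = real D" by (simp add: log_nat_power)
  finally show ?thesis by (simp add: nat_le_iff ceiling_le_iff)
qed

lemma code_bound:
  fixes k :: "nat set \<Rightarrow> nat"
  assumes b: "b \<ge> 1" and Cl: "Cl \<subseteq> weak_hypercliques m N f" and fin: "finite Cl"
    and cov: "\<forall>i<m. b \<le> (\<Sum>J\<in>{J\<in>Cl. i\<in>J}. k J)"
  shows "beta n m N f \<le> real (\<Sum>J\<in>Cl. k J) / real b"
proof -
  define Dom where "Dom = Sigma Cl (\<lambda>J. {..<k J})"
  have finDom: "finite Dom" unfolding Dom_def using fin by auto
  have cardDom: "card Dom = (\<Sum>J\<in>Cl. k J)" unfolding Dom_def using fin by simp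
  have "\<forall>i<m. \<exists>ci::nat set\<Rightarrow>nat\<Rightarrow>nat. \<forall>q<b. \<exists>J r. J\<in>Cl \<and> i\<in>J \<and> r<k J \<and> ci J r = q"
  proof (intro allI impI)
    fix i assume "i<m"
    let ?A = "Sigma {J\<in>Cl. i\<in>J} (\<lambda>J. {..<k J})"
    have "card {..<b} \<le> card ?A" using cov fin \<open>i<m\<close> by simp
    then obtain g where g: "g ` {..<b} \<subseteq> ?A" "inj_on g {..<b}"
      using card_le_inj[of "{..<b}" ?A] fin by auto
    show "\<exists>ci::nat set\<Rightarrow>nat\<Rightarrow>nat. \<forall>q<b. \<exists>J r. J\<in>Cl \<and> i\<in>J \<and> r<k J \<and> ci J r = q"
    proof (rule exI[where x="\<lambda>J r. inv_into {..<b} g (J,r)"], intro allI impI)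
      fix q assume q: "q < b"
      obtain J r where Jr: "g q = (J, r)" by (cases "g q")
      have "g q \<in> ?A" using g(1) q by (simp add: image_subset_iff)
      hence "(J,r) \<in> ?A" using Jr by simp
      moreover have "inv_into {..<b} g (g q) = q" using g(2) q by (simp add: inv_into_f_f)
      hence "inv_into {..<b} g (J, r) = q" using Jr by simp
      ultimately show "\<exists>J' r'. J'\<in>Cl \<and> i\<in>J' \<and> r'<k J' \<and> inv_into {..<b} g (J', r') = q"
        by auto
    qed
  qed
  then obtain c :: "nat \<Rightarrow> nat set\<Rightarrow>nat\<Rightarrow>nat"
    where c: "\<forall>i<m. \<forall>q<b. \<exists>J r. J\<in>Cl \<and> i\<in>J \<and> r<k J \<and> c i J r = q"
    using choice[where Q="\<lambda>i ci. i < m \<longrightarrow> (\<forall>q<b. \<exists>J r. J\<in>Cl \<and> i\<in>J \<and> r<k J \<and> ci J r = q)"] by blast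
  define C where "C = (\<lambda>x::nat\<Rightarrow>nat. {(J,r)\<in>Dom. odd (\<Sum>j\<in>J. if bit (x (f j)) (c j J r) then 1 else (0::nat))})"
  define S where "S = C ` msgs n b"
  have SP: "S \<subseteq> Pow Dom" unfolding S_def C_def by auto
  have finS: "finite S" using SP finDom finite_subset by blast
  have "card S \<le> card (Pow Dom)" by (rule card_mono) (use finDom SP in auto)
  hence cardS: "card S \<le> 2 ^ card Dom" using card_Pow[OF finDom] by simp
  obtain h where h: "bij_betw h S {0..<card S}" using ex_bij_betw_finite_nat finS by blast
  define E where "E = (\<lambda>x. h (C x))"
  define P where "P = E ` msgs n b"
  have PS: "P = h ` S" unfolding P_def E_def S_def by auto
  have cardP: "card P = card S" unfolding PS using h card_image bij_betw_imp_inj_on by blast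
  have "(\<lambda>_. 0) \<in> msgs n b" unfolding msgs_def by simp
  hence "P \<noteq> {}" unfolding P_def by blast
  hence P0: "card P \<noteq> 0" using PS finS by simp
  have sol: "ic_solution n m N f b E P"
    unfolding ic_solution_def
  proof (intro conjI ballI allI impI)
    show "finite P" using PS finS by simp
    show "E x \<in> P" if "x \<in> msgs n b" for x using that P_def by simp
    fix j assume j: "j < m"
    show "\<exists>D :: nat \<Rightarrow> (nat \<Rightarrow> nat) \<Rightarrow> nat. \<forall>x\<in>msgs n b. D (E x) (\<lambda>i. if i \<in> N j then x i else 0) = x (f j)"
    proof (rule decode_ex, intro ballI impI, elim conjE)
      fix x y assume x: "x \<in> msgs n b" and y: "y \<in> msgs n b" and Exy: "E x = E y"
        and agree: "\<forall>i\<in>N j. x i = y i"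
      have inj: "inj_on h S" using h by (rule bij_betw_imp_inj_on)
      have "C x \<in> S" "C y \<in> S" using x y unfolding S_def by auto
      hence Cxy: "C x = C y"
        using Exy inj unfolding E_def by (simp add: inj_on_eq_iff)
      have xb: "x i < 2 ^ b" for i using x unfolding msgs_def by (cases "i < n") auto
      have yb: "y i < 2 ^ b" for i using y unfolding msgs_def by (cases "i < n") auto
      show "x (f j) = y (f j)"
      proof (rule bits_eq[OF xb yb], intro allI impI)
        fix q assume q: "q < b"
        obtain J r where J: "J\<in>Cl" "j\<in>J" "r<k J" "c j J r = q" using c j q by blast
        have JD: "(J,r) \<in> Dom" using J unfolding Dom_def by auto
        have wc: "weak_hyperclique m N f J" using Cl J(1) unfolding weak_hypercliques_def by auto
        have finJ: "finite J" using wc unfolding weak_hyperclique_def using finite_subset by blast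
        define tx where "tx = (\<lambda>i. if bit (x (f i)) (c i J r) then 1 else (0::nat))"
        define ty where "ty = (\<lambda>i. if bit (y (f i)) (c i J r) then 1 else (0::nat))"
        have rest: "(\<Sum>i\<in>J-{j}. tx i) = (\<Sum>i\<in>J-{j}. ty i)"
        proof (rule sum.cong)
          fix i assume "i \<in> J - {j}"
          hence "f i \<in> N j" using wc J(2) unfolding weak_hyperclique_def by auto
          thus "tx i = ty i" using agree unfolding tx_def ty_def by simp
        qed simp
        have sx: "(\<Sum>i\<in>J. tx i) = tx j + (\<Sum>i\<in>J-{j}. tx i)" by (rule sum.remove[OF finJ J(2)])
        have sy: "(\<Sum>i\<in>J. ty i) = ty j + (\<Sum>i\<in>J-{j}. ty i)" by (rule sum.remove[OF finJ J(2)])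
        have "((J,r) \<in> C x) = ((J,r) \<in> C y)" using Cxy by simp
        hence "odd (\<Sum>i\<in>J. tx i) = odd (\<Sum>i\<in>J. ty i)"
          using JD unfolding C_def tx_def ty_def by simp
        hence "odd (tx j + (\<Sum>i\<in>J-{j}. ty i)) = odd (ty j + (\<Sum>i\<in>J-{j}. ty i))"
          unfolding sx sy rest .
        hence "tx j = ty j" unfolding tx_def ty_def by (simp split: if_splits)
        thus "bit (x (f j)) q = bit (y (f j)) q" unfolding tx_def ty_def using J(4) by (auto split: if_splits)
      qed
    qed
  qed
  have bt: "beta_t n m N f b \<le> card Dom"
  proof -
    have "beta_t n m N f b \<le> nat \<lceil>log 2 (real (card P))\<rceil>"
      unfolding beta_t_def by (rule cInf_lower) (use sol in auto)
    also have "\<dots> \<le> card Dom" using ceil_log_le cardP cardS P0 by simp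
    finally show ?thesis .
  qed
  have "beta n m N f \<le> real (beta_t n m N f b) / real b"
    unfolding beta_def by (rule cINF_lower) (use b in \<open>auto intro!: bdd_belowI2[where m=0]\<close>)
  also have "\<dots> \<le> real (card Dom) / real b"
    using bt by (simp add: divide_right_mono)
  finally show ?thesis using cardDom by simp
qed

theorem lemma3p3:
  assumes "dir_hypergraph n m N f"
  shows "beta n m N f \<le> psi_f n m N f"
proof -
  define W where "W = weak_hypercliques m N f"
  have finW: "finite W"
  proof -
    have "W \<subseteq> Pow {..<m}" unfolding W_def weak_hypercliques_def weak_hyperclique_def by auto
    thus ?thesis using finite_subset by blast
  qed
  have single: "{j} \<in> W" if "j < m" for j
    using that unfolding W_def weak_hypercliques_def weak_hyperclique_def by auto
  have main: "beta n m N f \<le> (\<Sum>J\<in>W. w J)" if w: "frac_whc_cover m N f w" for w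
  proof -
    have wpos: "\<And>J. J \<in> W \<Longrightarrow> w J \<ge> 0" using w unfolding frac_whc_cover_def W_def by auto
    have wcov: "\<And>j. j < m \<Longrightarrow> (\<Sum>J\<in>{J\<in>W. j \<in> J}. w J) \<ge> 1"
      using w unfolding frac_whc_cover_def W_def by auto
    define s where "s = (\<Sum>J\<in>W. w J)"
    define K where "K = card W"
    have bnd: "beta n m N f \<le> s + real K / real b" if b: "b \<ge> 1" for b :: nat
    proof -
      define k where "k = (\<lambda>J. nat \<lceil>real b * w J\<rceil>)"
      have kge: "real (k J) \<ge> real b * w J" if "J \<in> W" for J
        unfolding k_def using wpos[OF that] by linarith
      have kle: "real (k J) \<le> real b * w J + 1" if "J \<in> W" for J
      proof -
        have y: "0 \<le> real b * w J" using wpos[OF that] by simp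
        have "real (k J) = real_of_int \<lceil>real b * w J\<rceil>" unfolding k_def using y by simp
        also have "\<dots> \<le> real b * w J + 1" by (rule of_int_ceiling_le_add_one)
        finally show ?thesis .
      qed
      have cov: "\<forall>i<m. b \<le> (\<Sum>J\<in>{J\<in>W. i\<in>J}. k J)"
      proof (intro allI impI)
        fix i assume i: "i < m"
        have "real b \<le> real b * (\<Sum>J\<in>{J\<in>W. i \<in> J}. w J)"
          using mult_left_mono[OF wcov[OF i], of "real b"] by simp
        also have "\<dots> = (\<Sum>J\<in>{J\<in>W. i \<in> J}. real b * w J)" by (simp add: sum_distrib_left)
        also have "\<dots> \<le> (\<Sum>J\<in>{J\<in>W. i \<in> J}. real (k J))" by (rule sum_mono) (use kge in auto)
        also have "\<dots> = real (\<Sum>J\<in>{J\<in>W. i \<in> J}. k J)" by simp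
        finally show "b \<le> (\<Sum>J\<in>{J\<in>W. i\<in>J}. k J)" by linarith
      qed
      have "beta n m N f \<le> real (\<Sum>J\<in>W. k J) / real b"
        by (rule code_bound[OF b _ finW cov]) (simp add: W_def)
      also have "real (\<Sum>J\<in>W. k J) \<le> real b * s + real K"
      proof -
        have "real (\<Sum>J\<in>W. k J) = (\<Sum>J\<in>W. real (k J))" by simp
        also have "\<dots> \<le> (\<Sum>J\<in>W. real b * w J + 1)" by (rule sum_mono) (use kle in auto)
        also have "\<dots> = real b * s + real K" by (simp add: s_def K_def sum.distrib sum_distrib_left)
        finally show ?thesis .
      qed
      hence "real (\<Sum>J\<in>W. k J) / real b \<le> (real b * s + real K) / real b"
        using b by (simp add: divide_right_mono)
      also have "\<dots> = s + real K / real b" using b by (simp add: field_simps)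
      finally show ?thesis .
    qed
    show ?thesis unfolding s_def[symmetric]
    proof (rule ccontr)
      assume "\<not> beta n m N f \<le> s"
      hence d: "beta n m N f - s > 0" by simp
      define b where "b = nat \<lceil>real K / (beta n m N f - s)\<rceil> + 1"
      have b1: "b \<ge> 1" unfolding b_def by simp
      have "real b > real K / (beta n m N f - s)" unfolding b_def by linarith
      hence "real K < real b * (beta n m N f - s)" using d by (simp add: field_simps)
      hence "real K / real b < beta n m N f - s" using b1 by (simp add: field_simps)
      with bnd[OF b1] show False by linarith
    qed
  qed
  have ne: "{(\<Sum>J\<in>weak_hypercliques m N f. w J) | w. frac_whc_cover m N f w} \<noteq> {}"
  proof -
    have "frac_whc_cover m N f (\<lambda>_. 1)"
      unfolding frac_whc_cover_def
    proof (intro conjI ballI allI impI)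
      fix j assume j: "j < m"
      have "{j} \<in> {J\<in>weak_hypercliques m N f. j \<in> J}" using single[OF j] by (simp add: W_def)
      moreover have "finite {J\<in>weak_hypercliques m N f. j \<in> J}" using finW by (simp add: W_def)
      ultimately have "card {J\<in>weak_hypercliques m N f. j \<in> J} \<noteq> 0" by auto
      thus "1 \<le> (\<Sum>J\<in>{J\<in>weak_hypercliques m N f. j \<in> J}. (1::real))" by simp
    qed simp
    thus ?thesis by blast
  qed
  show ?thesis unfolding psi_f_def
    by (rule cInf_greatest[OF ne]) (use main in \<open>auto simp: W_def\<close>)
qed

end
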